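(* Let $G$ be a graph with no isolated vertices and let $S\subseteq V(G)$. If $N[v]\subseteq S$ for some vertex $v$, then $S$ is not a ZIr-set. Equivalently, if $S$ is a ZIr-set of $G$, then $V(G)\setminus S$ is a dominating set of $G$.
   Context: $N[v]=N(v)\cup\{v\}$ is the closed neighborhood. A dominating set is a set $D$ such that every vertex is in $D$ or adjacent to a vertex of $D$. A nonempty $F\subseteq V(G)$ is a fort if every $v\notin F$ satisfies $|N(v)\cap F|\ne1$. For $S\subseteq V(G)$, $x\in S$, a private fort of $x$ relative to $S$ is a fort $F$ with $S\cap F=\{x\}$. $S$ is a ZIr-set if every element of $S$ has a private fort relative to $S$. *)

theory Defs
  imports Main
begin

definition graph :: "'a set \<Rightarrow> ('a \<Rightarrow> 'a \<Rightarrow> bool) \<Rightarrow> bool" where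
  "graph V E \<longleftrightarrow> finite V \<and> (\<forall>u v. E u v \<longrightarrow> u \<in> V \<and> v \<in> V)
     \<and> (\<forall>u v. E u v \<longrightarrow> E v u) \<and> (\<forall>v. \<not> E v v)"

definition nbhd :: "'a set \<Rightarrow> ('a \<Rightarrow> 'a \<Rightarrow> bool) \<Rightarrow> 'a \<Rightarrow> 'a set" where
  "nbhd V E v = {u \<in> V. E v u}"

definition closed_nbhd :: "'a set \<Rightarrow> ('a \<Rightarrow> 'a \<Rightarrow> bool) \<Rightarrow> 'a \<Rightarrow> 'a set" where
  "closed_nbhd V E v = insert v (nbhd V E v)"

definition no_isolated :: "'a set \<Rightarrow> ('a \<Rightarrow> 'a \<Rightarrow> bool) \<Rightarrow> bool" where
  "no_isolated V E \<longleftrightarrow> (\<forall>v\<in>V. nbhd V E v \<noteq> {})"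

definition dominating :: "'a set \<Rightarrow> ('a \<Rightarrow> 'a \<Rightarrow> bool) \<Rightarrow> 'a set \<Rightarrow> bool" where
  "dominating V E D \<longleftrightarrow> D \<subseteq> V \<and> (\<forall>v\<in>V. v \<in> D \<or> (\<exists>u\<in>D. E v u))"

definition fort :: "'a set \<Rightarrow> ('a \<Rightarrow> 'a \<Rightarrow> bool) \<Rightarrow> 'a set \<Rightarrow> bool" where
  "fort V E F \<longleftrightarrow> F \<noteq> {} \<and> F \<subseteq> V \<and> (\<forall>v \<in> V - F. card (nbhd V E v \<inter> F) \<noteq> 1)"

definition private_fort :: "'a set \<Rightarrow> ('a \<Rightarrow> 'a \<Rightarrow> bool) \<Rightarrow> 'a set \<Rightarrow> 'a \<Rightarrow> 'a set \<Rightarrow> bool" where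
  "private_fort V E S x F \<longleftrightarrow> fort V E F \<and> S \<inter> F = {x}"

definition ZIr_set :: "'a set \<Rightarrow> ('a \<Rightarrow> 'a \<Rightarrow> bool) \<Rightarrow> 'a set \<Rightarrow> bool" where
  "ZIr_set V E S \<longleftrightarrow> S \<subseteq> V \<and> (\<forall>x\<in>S. \<exists>F. private_fort V E S x F)"

end

theory Submission
  imports Defs
begin

lemma key:
  assumes "graph V E" and "no_isolated V E" and "v \<in> V" and "closed_nbhd V E v \<subseteq> S"
  shows "\<not> ZIr_set V E S"
proof
  assume Z: "ZIr_set V E S"
  obtain u where u: "u \<in> nbhd V E v" using assms(2,3) unfolding no_isolated_def by blast
  have uS: "u \<in> S" using u assms(4) unfolding closed_nbhd_def by blast
  have vS: "v \<in> S" using assms(4) unfolding closed_nbhd_def by blast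
  have uv: "u \<noteq> v" using u assms(1) unfolding nbhd_def graph_def by blast
  obtain F where F: "fort V E F" "S \<inter> F = {u}" using Z uS unfolding ZIr_set_def private_fort_def by blast
  have vF: "v \<notin> F" using F(2) vS uv by (metis IntI singletonD)
  have "nbhd V E v \<inter> F = {u}"
  proof
    show "nbhd V E v \<inter> F \<subseteq> {u}" using F(2) assms(4) unfolding closed_nbhd_def by blast
    show "{u} \<subseteq> nbhd V E v \<inter> F" using u F(2) by blast
  qed
  then have "card (nbhd V E v \<inter> F) = 1" by simp
  moreover have "v \<in> V - F" using assms(3) vF by blast
  ultimately show False using F(1) unfolding fort_def by blast
qed

theorem lemma2p8:
  fixes V :: "'a set" and E :: "'a \<Rightarrow> 'a \<Rightarrow> bool" and S :: "'a set"
  assumes "graph V E" and "no_isolated V E" and "S \<subseteq> V"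
  shows "((\<exists>v\<in>V. closed_nbhd V E v \<subseteq> S) \<longrightarrow> \<not> ZIr_set V E S)
       \<and> (ZIr_set V E S \<longrightarrow> dominating V E (V - S))"
proof (intro conjI impI)
  show "\<not> ZIr_set V E S" if "\<exists>v\<in>V. closed_nbhd V E v \<subseteq> S"
  proof -
    from that obtain v where "v \<in> V" "closed_nbhd V E v \<subseteq> S" by blast
    then show ?thesis using key[OF assms(1,2)] by blast
  qed
  show "dominating V E (V - S)" if Z: "ZIr_set V E S"
  proof (rule ccontr)
    assume "\<not> dominating V E (V - S)"
    then obtain v where v: "v \<in> V" "v \<in> S" "\<forall>u\<in>V - S. \<not> E v u"
      using assms(3) unfolding dominating_def by auto
    have "closed_nbhd V E v \<subseteq> S" using v unfolding closed_nbhd_def nbhd_def by blast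
    then show False using key[OF assms(1,2) v(1)] Z by simp
  qed
qed

end
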